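(* Let $n\ge 2$ and consider $n+1$ qubits labelled $1,\dots,n+1$. Qubit $1$ holds an arbitrary single-qubit pure state $|\psi\rangle$ to be teleported, and qubits $2,\dots,n+1$ hold an $n$-qubit state $\rho$ (the channel), so the initial state is $\rho'=|\psi\rangle\langle\psi|\otimes\rho$. Qubit $S=2$ is the sender's qubit, qubit $R=n+1$ is the receiver's qubit, and the qubits in $X=\{3,\dots,n\}$ may be held by the sender and/or any number of controllers. Consider a teleportation protocol of the following form: a (possibly non-local) unitary $V$ acting on qubits $[n]=\{1,\dots,n\}$ is applied; then the qubits in $X$ are measured in the basis $\{U^\dagger|t\rangle\}_t$ for some unitary $U$ on the qubits of $X$ ($t$ ranging over computational-basis outcomes of $X$); qubits $1$ and $2$ undergo a Bell measurement; and finally a classically conditioned unitary $W$, depending on all measurement outcomes, is applied to qubit $R$, producing the receiver state $\rho_T$. Define $\rho_X$ as the reduced state of $V\rho' V^\dagger$ on the qubits of $X$, $p_t(U)=\langle t|U\rho_X U^\dagger|t\rangle$, and for $p_t(U)>0$ the conditional two-qubit state of $S$ and $R$ $$\rho_{SR}^t=\frac{\mathrm{Tr}_X\!\left\{\left(U^\dagger|t\rangle\langle t|U\right)_X\,\mathrm{Tr}_1\!\left\{V\rho'V^\dagger\right\}\left(U^\dagger|t\rangle\langle t|U\right)_X\right\}}{p_t(U)}.$$ Define the localizable concurrence $\mathcal{C}_L(\rho)=\max_U\sum_t p_t(U)\,\mathcal{C}(\rho_{SR}^t)$ and the teleportation fidelity $F_T(\rho)=\max_U\sum_t p_t(U)\,F(\rho_{SR}^t)$.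 Then $$\max\left\{\frac{3+\mathcal{C}_L(\rho)}{6},\ \frac{1+2\mathcal{C}_L(\rho)}{3}\right\}\le F_T(\rho)\le\frac{2+\mathcal{C}_L(\rho)}{3}.$$
   Context: $\mathcal{C}(\sigma)$ denotes the Wootters concurrence of a two-qubit state $\sigma$. $F(\sigma)$ denotes the (optimal, average over input states) fidelity of teleporting one qubit using the two-qubit state $\sigma$ as the shared resource in the standard protocol (Bell measurement by the sender, two classical bits, local correction by the receiver); it is a known fact that for every two-qubit state $\sigma$, $\max\{\frac{3+\mathcal{C}(\sigma)}{6},\frac{1+2\mathcal{C}(\sigma)}{3}\}\le F(\sigma)\le \frac{2+\mathcal{C}(\sigma)}{3}$. Subscripts on operators indicate the qubits they act on; $\mathrm{Tr}_1$ is the partial trace over qubit $1$ and $\mathrm{Tr}_X$ the partial trace over the qubits in $X$. *)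

theory Defs
  imports Complex_Main "Jordan_Normal_Form.Char_Poly"
begin

(* A computational
   basis state of a finite set Q of qubits is identified with the subset a \<subseteq> Q of
   qubits that are in state |1>.  An operator on the qubits Q is a matrix indexed by
   Pow Q \<times> Pow Q; we represent it as a function (entries outside Pow Q are irrelevant). *)
type_synonym qop = "nat set \<Rightarrow> nat set \<Rightarrow> complex"
type_synonym qvec = "nat set \<Rightarrow> complex"

definition op_mult :: "nat set \<Rightarrow> qop \<Rightarrow> qop \<Rightarrow> qop" where
  "op_mult Q A B = (\<lambda>a b. \<Sum>c\<in>Pow Q. A a c * B c b)"

definition op_adj :: "qop \<Rightarrow> qop" where
  "op_adj A = (\<lambda>a b. cnj (A b a))"

definition op_id :: qop where
  "op_id = (\<lambda>a b. if a = b then 1 else 0)"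

definition unitary_op :: "nat set \<Rightarrow> qop \<Rightarrow> bool" where
  "unitary_op Q U \<longleftrightarrow>
     (\<forall>a\<in>Pow Q. \<forall>b\<in>Pow Q. op_mult Q U (op_adj U) a b = op_id a b
                         \<and> op_mult Q (op_adj U) U a b = op_id a b)"

definition density_op :: "nat set \<Rightarrow> qop \<Rightarrow> bool" where
  "density_op Q \<rho> \<longleftrightarrow>
     (\<Sum>a\<in>Pow Q. \<rho> a a) = 1 \<and>
     (\<forall>v :: qvec. Im (\<Sum>a\<in>Pow Q. \<Sum>b\<in>Pow Q. cnj (v a) * \<rho> a b * v b) = 0 \<and>
                  Re (\<Sum>a\<in>Pow Q. \<Sum>b\<in>Pow Q. cnj (v a) * \<rho> a b * v b) \<ge> 0)"

definition unit_vec :: "nat set \<Rightarrow> qvec \<Rightarrow> bool" where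
  "unit_vec Q v \<longleftrightarrow> (\<Sum>a\<in>Pow Q. cnj (v a) * v a) = 1"

text \<open>A \<otimes> I: the operator A acting on the qubits Y, extended by the identity on the
  remaining qubits.\<close>
definition embed :: "nat set \<Rightarrow> qop \<Rightarrow> qop" where
  "embed Y A = (\<lambda>a b. if a - Y = b - Y then A (a \<inter> Y) (b \<inter> Y) else 0)"

definition ptrace :: "nat set \<Rightarrow> qop \<Rightarrow> qop" where
  "ptrace Y M = (\<lambda>a b. \<Sum>c\<in>Pow Y. M (a \<union> c) (b \<union> c))"

definition proj_tensor :: "nat set \<Rightarrow> qvec \<Rightarrow> qop \<Rightarrow> qop" where
  "proj_tensor P \<psi> \<rho> = (\<lambda>a b. \<psi> (a \<inter> P) * cnj (\<psi> (b \<inter> P)) * \<rho> (a - P) (b - P))"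

(* Two-qubit states as 4x4 matrices (Jordan_Normal_Form); the basis |ij>, i for the
   first qubit, j for the second, is ordered as index 2*i + j. *)

definition to_2qubit :: "nat \<Rightarrow> nat \<Rightarrow> qop \<Rightarrow> complex mat" where
  "to_2qubit S R M = mat 4 4 (\<lambda>(i, j).
      M ((if i div 2 = 1 then {S} else {}) \<union> (if i mod 2 = 1 then {R} else {}))
        ((if j div 2 = 1 then {S} else {}) \<union> (if j mod 2 = 1 then {R} else {})))"

definition two_qubit_state :: "complex mat \<Rightarrow> bool" where
  "two_qubit_state \<sigma> \<longleftrightarrow> \<sigma> \<in> carrier_mat 4 4 \<and> (\<Sum>i<4. \<sigma> $$ (i, i)) = 1 \<and>
     (\<forall>v :: nat \<Rightarrow> complex.
        Im (\<Sum>i<4. \<Sum>j<4. cnj (v i) * \<sigma> $$ (i, j) * v j) = 0 \<and>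
        Re (\<Sum>i<4. \<Sum>j<4. cnj (v i) * \<sigma> $$ (i, j) * v j) \<ge> 0)"

definition sigma_yy :: "complex mat" where
  "sigma_yy = mat 4 4 (\<lambda>(i, j). if i + j = 3 then (if i = 0 \<or> i = 3 then -1 else 1) else 0)"

text \<open>Wootters concurrence: C = max(0, l1 - l2 - l3 - l4), where l1 \<ge> ... \<ge> l4 are the
  square roots of the eigenvalues (with multiplicity) of \<sigma> (\<sigma>_y\<otimes>\<sigma>_y) \<sigma>^* (\<sigma>_y\<otimes>\<sigma>_y).\<close>
definition concurrence :: "complex mat \<Rightarrow> real" where
  "concurrence \<sigma> =
    (let Rm = \<sigma> * (sigma_yy * map_mat cnj \<sigma> * sigma_yy);
         ls = (SOME ls :: real list. length ls = 4 \<and> sorted_wrt (\<ge>) ls \<and> (\<forall>x\<in>set ls. x \<ge> 0) \<and>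
                 char_poly Rm = prod_list (map (\<lambda>x. [:- complex_of_real (x\<^sup>2), 1:]) ls))
     in max 0 (ls ! 0 - ls ! 1 - ls ! 2 - ls ! 3))"

definition evolved :: "nat \<Rightarrow> qvec \<Rightarrow> qop \<Rightarrow> qop \<Rightarrow> qop" where
  "evolved n \<psi> \<rho> V =
     op_mult {1..n+1} (op_mult {1..n+1} (embed {1..n} V) (proj_tensor {1} \<psi> \<rho>))
                      (op_adj (embed {1..n} V))"

definition prob_t :: "nat \<Rightarrow> qvec \<Rightarrow> qop \<Rightarrow> qop \<Rightarrow> qop \<Rightarrow> nat set \<Rightarrow> real" where
  "prob_t n \<psi> \<rho> V U t =
     (let \<rho>X = ptrace ({1..n+1} - {3..n}) (evolved n \<psi> \<rho> V)
      in Re (\<Sum>a\<in>Pow {3..n}. \<Sum>b\<in>Pow {3..n}. U t a * \<rho>X a b * cnj (U t b)))"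

definition meas_proj :: "qop \<Rightarrow> nat set \<Rightarrow> qop" where
  "meas_proj U t = (\<lambda>a b. cnj (U t a) * U t b)"

definition cond_state :: "nat \<Rightarrow> qvec \<Rightarrow> qop \<Rightarrow> qop \<Rightarrow> qop \<Rightarrow> nat set \<Rightarrow> qop" where
  "cond_state n \<psi> \<rho> V U t =
     (let Q1 = {2..n+1};
          M = ptrace {1} (evolved n \<psi> \<rho> V);
          P = embed {3..n} (meas_proj U t)
      in (\<lambda>a b. ptrace {3..n} (op_mult Q1 (op_mult Q1 P M) P) a b
                 / complex_of_real (prob_t n \<psi> \<rho> V U t)))"

definition localizable_concurrence :: "nat \<Rightarrow> qvec \<Rightarrow> qop \<Rightarrow> qop \<Rightarrow> real" where
  "localizable_concurrence n \<psi> \<rho> V =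
     (SUP U\<in>{U. unitary_op {3..n} U}.
        \<Sum>t\<in>{t. t \<subseteq> {3..n} \<and> prob_t n \<psi> \<rho> V U t > 0}.
          prob_t n \<psi> \<rho> V U t * concurrence (to_2qubit 2 (n+1) (cond_state n \<psi> \<rho> V U t)))"

definition teleportation_fidelity ::
    "(complex mat \<Rightarrow> real) \<Rightarrow> nat \<Rightarrow> qvec \<Rightarrow> qop \<Rightarrow> qop \<Rightarrow> real" where
  "teleportation_fidelity F n \<psi> \<rho> V =
     (SUP U\<in>{U. unitary_op {3..n} U}.
        \<Sum>t\<in>{t. t \<subseteq> {3..n} \<and> prob_t n \<psi> \<rho> V U t > 0}.
          prob_t n \<psi> \<rho> V U t * F (to_2qubit 2 (n+1) (cond_state n \<psi> \<rho> V U t)))"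

end

theory Submission
  imports Defs
begin


definition qf :: "nat set \<Rightarrow> qop \<Rightarrow> qvec \<Rightarrow> complex" where
  "qf Q A v = (\<Sum>a\<in>Pow Q. \<Sum>b\<in>Pow Q. cnj (v a) * A a b * v b)"
definition psd :: "nat set \<Rightarrow> qop \<Rightarrow> bool" where
  "psd Q A \<longleftrightarrow> (\<forall>v. Im (qf Q A v) = 0 \<and> Re (qf Q A v) \<ge> 0)"
definition tr :: "nat set \<Rightarrow> qop \<Rightarrow> complex" where
  "tr Q A = (\<Sum>a\<in>Pow Q. A a a)"

lemma density_op_iff: "density_op Q A \<longleftrightarrow> tr Q A = 1 \<and> psd Q A"
  by (simp add: density_op_def tr_def psd_def qf_def)

lemma un_int1: "x \<subseteq> Y \<Longrightarrow> z \<subseteq> Z \<Longrightarrow> Y \<inter> Z = {} \<Longrightarrow> (x \<union> z) \<inter> Y = x" by blast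
lemma un_int2: "x \<subseteq> Y \<Longrightarrow> z \<subseteq> Z \<Longrightarrow> Y \<inter> Z = {} \<Longrightarrow> (x \<union> z) \<inter> Z = z" by blast

lemma pow_split:
  assumes "finite A" "finite B" "A \<inter> B = {}"
  shows "sum f (Pow (A \<union> B)) = (\<Sum>x\<in>Pow A. \<Sum>y\<in>Pow B. f (x \<union> y))"
proof -
  have inj: "inj_on (\<lambda>(x,y). x \<union> y) (Pow A \<times> Pow B)"
  proof (rule inj_onI)
    fix p q assume p: "p \<in> Pow A \<times> Pow B" and q: "q \<in> Pow A \<times> Pow B"
      and e: "(\<lambda>(x,y). x \<union> y) p = (\<lambda>(x,y). x \<union> y) q"
    obtain x y where pxy: "p = (x, y)" by (cases p)
    obtain x' y' where qxy: "q = (x', y')" by (cases q)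
    have s: "x \<subseteq> A" "y \<subseteq> B" "x' \<subseteq> A" "y' \<subseteq> B" using p q pxy qxy by auto
    have e2: "x \<union> y = x' \<union> y'" using e pxy qxy by simp
    have "x = x'" using un_int1[OF s(1,2) assms(3)] un_int1[OF s(3,4) assms(3)] e2 by simp
    moreover have "y = y'" using un_int2[OF s(1,2) assms(3)] un_int2[OF s(3,4) assms(3)] e2 by simp
    ultimately show "p = q" using pxy qxy by simp
  qed
  have img: "(\<lambda>(x,y). x \<union> y) ` (Pow A \<times> Pow B) = Pow (A \<union> B)"
  proof
    show "(\<lambda>(x,y). x \<union> y) ` (Pow A \<times> Pow B) \<subseteq> Pow (A \<union> B)" by auto
    show "Pow (A \<union> B) \<subseteq> (\<lambda>(x,y). x \<union> y) ` (Pow A \<times> Pow B)"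
    proof
      fix s assume s: "s \<in> Pow (A \<union> B)"
      have "s = (\<lambda>(x,y). x \<union> y) (s \<inter> A, s \<inter> B)" using s by auto
      moreover have "(s \<inter> A, s \<inter> B) \<in> Pow A \<times> Pow B" by auto
      ultimately show "s \<in> (\<lambda>(x,y). x \<union> y) ` (Pow A \<times> Pow B)" by (rule image_eqI)
    qed
  qed
  have "sum f (Pow (A \<union> B)) = sum (f \<circ> (\<lambda>(x,y). x \<union> y)) (Pow A \<times> Pow B)"
    using sum.reindex[OF inj, of f] img by simp
  also have "\<dots> = (\<Sum>x\<in>Pow A. \<Sum>y\<in>Pow B. f (x \<union> y))"
    by (simp add: sum.cartesian_product split_def)
  finally show ?thesis .
qed

lemma un_diff1: "x \<subseteq> Y \<Longrightarrow> z \<subseteq> Z \<Longrightarrow> Y \<inter> Z = {} \<Longrightarrow> (x \<union> z) - Y = z" by blast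
lemma un_diff2: "x \<subseteq> Y \<Longrightarrow> z \<subseteq> Z \<Longrightarrow> Y \<inter> Z = {} \<Longrightarrow> (x \<union> z) - Z = x" by blast

lemma delta1: "finite S \<Longrightarrow> z \<in> S \<Longrightarrow> (\<Sum>x\<in>S. c x * (if x = z then b else (0::complex))) = c z * b"
proof -
  assume "finite S" "z \<in> S"
  have "(\<Sum>x\<in>S. c x * (if x = z then b else 0)) = (\<Sum>x\<in>S. if x = z then c x * b else 0)"
    by (rule sum.cong) auto
  then show ?thesis using \<open>finite S\<close> \<open>z \<in> S\<close> by simp
qed
lemma delta1': "finite S \<Longrightarrow> z \<in> S \<Longrightarrow> (\<Sum>x\<in>S. (if x = z then b else (0::complex)) * c x) = b * c z"
proof -
  assume "finite S" "z \<in> S"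
  have "(\<Sum>x\<in>S. (if x = z then b else 0) * c x) = (\<Sum>x\<in>S. if x = z then b * c x else 0)"
    by (rule sum.cong) auto
  then show ?thesis using \<open>finite S\<close> \<open>z \<in> S\<close> by simp
qed
lemma delta2: "finite S \<Longrightarrow> z \<in> S \<Longrightarrow>
  (\<Sum>x\<in>S. \<Sum>y\<in>S. cnj (if x = z then a else 0) * F x y * (if y = z then b else (0::complex))) = cnj a * F z z * b"
proof -
  assume S: "finite S" "z \<in> S"
  have "(\<Sum>x\<in>S. \<Sum>y\<in>S. cnj (if x = z then a else 0) * F x y * (if y = z then b else 0))
     = (\<Sum>x\<in>S. cnj (if x = z then a else 0) * F x z * b)"
    using S by (simp add: delta1)
  also have "\<dots> = (\<Sum>x\<in>S. (if x = z then cnj a else 0) * (F x z * b))"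
    by (rule sum.cong) (auto)
  also have "\<dots> = cnj a * F z z * b" using S by (simp add: delta1')
  finally show ?thesis .
qed

lemma psd_diag:
  assumes "psd Q A" "finite Q" "a \<in> Pow Q"
  shows "Im (A a a) = 0 \<and> Re (A a a) \<ge> 0"
proof -
  have "qf Q A (\<lambda>d. if d = a then 1 else 0) = cnj 1 * A a a * 1"
    unfolding qf_def using assms(2,3) by (intro delta2) auto
  moreover have "Im (qf Q A (\<lambda>d. if d = a then 1 else 0)) = 0 \<and> Re (qf Q A (\<lambda>d. if d = a then 1 else 0)) \<ge> 0"
    using assms(1) unfolding psd_def by blast
  ultimately show ?thesis by simp
qed

lemma tr_psd:
  assumes "psd Q A" "finite Q"
  shows "Im (tr Q A) = 0 \<and> Re (tr Q A) \<ge> 0"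
  using psd_diag[OF assms] by (auto simp: tr_def Im_sum Re_sum intro!: sum_nonneg sum.neutral)

lemma swap4: "(\<Sum>a\<in>S. \<Sum>b\<in>T. \<Sum>d\<in>U. \<Sum>c\<in>W. f a b c d) = (\<Sum>c\<in>W. \<Sum>d\<in>U. \<Sum>a\<in>S. \<Sum>b\<in>T. f a b c d)"
proof -
  have "(\<Sum>a\<in>S. \<Sum>b\<in>T. \<Sum>d\<in>U. \<Sum>c\<in>W. f a b c d) = (\<Sum>a\<in>S. \<Sum>d\<in>U. \<Sum>b\<in>T. \<Sum>c\<in>W. f a b c d)"
    by (rule sum.cong[OF refl], rule sum.swap)
  also have "\<dots> = (\<Sum>a\<in>S. \<Sum>d\<in>U. \<Sum>c\<in>W. \<Sum>b\<in>T. f a b c d)"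
    by (rule sum.cong[OF refl], rule sum.cong[OF refl], rule sum.swap)
  also have "\<dots> = (\<Sum>d\<in>U. \<Sum>a\<in>S. \<Sum>c\<in>W. \<Sum>b\<in>T. f a b c d)"
    by (rule sum.swap)
  also have "\<dots> = (\<Sum>d\<in>U. \<Sum>c\<in>W. \<Sum>a\<in>S. \<Sum>b\<in>T. f a b c d)"
    by (rule sum.cong[OF refl], rule sum.swap)
  also have "\<dots> = (\<Sum>c\<in>W. \<Sum>d\<in>U. \<Sum>a\<in>S. \<Sum>b\<in>T. f a b c d)"
    by (rule sum.swap)
  finally show ?thesis .
qed

lemma swap3a: "(\<Sum>a\<in>A. \<Sum>b\<in>B. \<Sum>c\<in>C. f a b c) = (\<Sum>c\<in>C. \<Sum>b\<in>B. \<Sum>a\<in>A. f a b c)"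
proof -
  have "(\<Sum>a\<in>A. \<Sum>b\<in>B. \<Sum>c\<in>C. f a b c) = (\<Sum>b\<in>B. \<Sum>a\<in>A. \<Sum>c\<in>C. f a b c)"
    by (rule sum.swap)
  also have "\<dots> = (\<Sum>b\<in>B. \<Sum>c\<in>C. \<Sum>a\<in>A. f a b c)"
    by (rule sum.cong[OF refl], rule sum.swap)
  also have "\<dots> = (\<Sum>c\<in>C. \<Sum>b\<in>B. \<Sum>a\<in>A. f a b c)"
    by (rule sum.swap)
  finally show ?thesis .
qed

lemma swap3b: "(\<Sum>a\<in>A. \<Sum>b\<in>B. \<Sum>c\<in>C. f a b c) = (\<Sum>b\<in>B. \<Sum>c\<in>C. \<Sum>a\<in>A. f a b c)"
proof -
  have "(\<Sum>a\<in>A. \<Sum>b\<in>B. \<Sum>c\<in>C. f a b c) = (\<Sum>b\<in>B. \<Sum>a\<in>A. \<Sum>c\<in>C. f a b c)"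
    by (rule sum.swap)
  also have "\<dots> = (\<Sum>b\<in>B. \<Sum>c\<in>C. \<Sum>a\<in>A. f a b c)"
    by (rule sum.cong[OF refl], rule sum.swap)
  finally show ?thesis .
qed

lemma conj_qf:
  "qf Q (op_mult Q (op_mult Q A B) (op_adj A)) v = qf Q B (\<lambda>c. \<Sum>a\<in>Pow Q. cnj (A a c) * v a)"
proof -
  have "qf Q (op_mult Q (op_mult Q A B) (op_adj A)) v =
     (\<Sum>a\<in>Pow Q. \<Sum>b\<in>Pow Q. \<Sum>d\<in>Pow Q. \<Sum>c\<in>Pow Q. cnj (v a) * A a c * B c d * cnj (A b d) * v b)"
    by (simp add: qf_def op_mult_def op_adj_def sum_distrib_left sum_distrib_right mult_ac)
  also have "\<dots> = (\<Sum>c\<in>Pow Q. \<Sum>d\<in>Pow Q. \<Sum>a\<in>Pow Q. \<Sum>b\<in>Pow Q. cnj (v a) * A a c * B c d * cnj (A b d) * v b)"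
    by (rule swap4)
  also have "\<dots> = qf Q B (\<lambda>c. \<Sum>a\<in>Pow Q. cnj (A a c) * v a)"
    unfolding qf_def
  proof (intro sum.cong refl)
    fix c d
    have "cnj (\<Sum>a\<in>Pow Q. cnj (A a c) * v a) * B c d * (\<Sum>b\<in>Pow Q. cnj (A b d) * v b)
       = (\<Sum>a\<in>Pow Q. A a c * cnj (v a) * B c d) * (\<Sum>b\<in>Pow Q. cnj (A b d) * v b)"
      by (simp add: cnj_sum sum_distrib_right)
    also have "\<dots> = (\<Sum>a\<in>Pow Q. \<Sum>b\<in>Pow Q. (A a c * cnj (v a) * B c d) * (cnj (A b d) * v b))"
      by (simp only: sum_product)
    also have "\<dots> = (\<Sum>a\<in>Pow Q. \<Sum>b\<in>Pow Q. cnj (v a) * A a c * B c d * cnj (A b d) * v b)"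
      by (simp add: mult_ac)
    finally show "(\<Sum>a\<in>Pow Q. \<Sum>b\<in>Pow Q. cnj (v a) * A a c * B c d * cnj (A b d) * v b) =
      cnj (\<Sum>a\<in>Pow Q. cnj (A a c) * v a) * B c d * (\<Sum>b\<in>Pow Q. cnj (A b d) * v b)" by simp
  qed
  finally show ?thesis .
qed


lemma conj_tr:
  assumes "finite Q" "\<forall>c\<in>Pow Q. \<forall>d\<in>Pow Q. (\<Sum>a\<in>Pow Q. cnj (A a d) * A a c) = op_id d c"
  shows "tr Q (op_mult Q (op_mult Q A B) (op_adj A)) = tr Q B"
proof -
  have "tr Q (op_mult Q (op_mult Q A B) (op_adj A)) =
     (\<Sum>a\<in>Pow Q. \<Sum>d\<in>Pow Q. \<Sum>c\<in>Pow Q. A a c * B c d * cnj (A a d))"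
    by (simp add: tr_def op_mult_def op_adj_def sum_distrib_right)
  also have "\<dots> = (\<Sum>c\<in>Pow Q. \<Sum>d\<in>Pow Q. \<Sum>a\<in>Pow Q. A a c * B c d * cnj (A a d))"
    by (rule swap3a)
  also have "\<dots> = (\<Sum>c\<in>Pow Q. \<Sum>d\<in>Pow Q. B c d * (\<Sum>a\<in>Pow Q. cnj (A a d) * A a c))"
    by (simp add: sum_distrib_left mult_ac)
  also have "\<dots> = (\<Sum>c\<in>Pow Q. \<Sum>d\<in>Pow Q. B c d * op_id d c)"
    using assms(2) by simp
  also have "\<dots> = tr Q B"
    unfolding tr_def op_id_def using assms(1)
    by (intro sum.cong refl) (simp add: delta1)
  finally show ?thesis .
qed

lemma ptrace_tr:
  assumes "finite Y" "finite Z" "Y \<inter> Z = {}"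
  shows "tr Y (ptrace Z A) = tr (Y \<union> Z) A"
  by (simp add: tr_def ptrace_def pow_split[OF assms])

lemma ptrace_ptrace:
  assumes "finite Y" "finite Z" "Y \<inter> Z = {}"
  shows "ptrace Y (ptrace Z A) a b = ptrace (Y \<union> Z) A a b"
  by (simp add: ptrace_def pow_split[OF assms] Un_assoc)

lemma ptrace_qf:
  assumes "finite Y" "finite Z" "Y \<inter> Z = {}"
  shows "qf Y (ptrace Z A) v = (\<Sum>z\<in>Pow Z. qf (Y \<union> Z) A (\<lambda>d. if d \<inter> Z = z then v (d \<inter> Y) else 0))"
proof -
  define w where "w = (\<lambda>z d. if d \<inter> Z = z then v (d \<inter> Y) else 0)"
  have key: "qf (Y \<union> Z) A (w z) =
     (\<Sum>y\<in>Pow Y. \<Sum>y2\<in>Pow Y. cnj (v y) * A (y \<union> z) (y2 \<union> z) * v y2)" if z: "z \<in> Pow Z" for z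
  proof -
    have "qf (Y \<union> Z) A (w z) = (\<Sum>y\<in>Pow Y. \<Sum>z'\<in>Pow Z. \<Sum>y2\<in>Pow Y. \<Sum>z2\<in>Pow Z.
        cnj (w z (y \<union> z')) * A (y \<union> z') (y2 \<union> z2) * w z (y2 \<union> z2))"
      by (simp only: qf_def pow_split[OF assms])
    also have "\<dots> = (\<Sum>y\<in>Pow Y. \<Sum>y2\<in>Pow Y. \<Sum>z'\<in>Pow Z. \<Sum>z2\<in>Pow Z.
        cnj (w z (y \<union> z')) * A (y \<union> z') (y2 \<union> z2) * w z (y2 \<union> z2))"
      by (rule sum.cong[OF refl], rule sum.swap)
    also have "\<dots> = (\<Sum>y\<in>Pow Y. \<Sum>y2\<in>Pow Y. cnj (v y) * A (y \<union> z) (y2 \<union> z) * v y2)"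
    proof (rule sum.cong[OF refl], rule sum.cong[OF refl])
      fix y y2 assume y: "y \<in> Pow Y" and y2: "y2 \<in> Pow Y"
      have w1: "w z (y \<union> z') = (if z' = z then v y else 0)" if "z' \<in> Pow Z" for z'
        using y that assms(3) by (auto simp: w_def un_int1 un_int2)
      have w2: "w z (y2 \<union> z') = (if z' = z then v y2 else 0)" if "z' \<in> Pow Z" for z'
        using y2 that assms(3) by (auto simp: w_def un_int1 un_int2)
      have "(\<Sum>z'\<in>Pow Z. \<Sum>z2\<in>Pow Z. cnj (w z (y \<union> z')) * A (y \<union> z') (y2 \<union> z2) * w z (y2 \<union> z2))
         = (\<Sum>z'\<in>Pow Z. \<Sum>z2\<in>Pow Z. cnj (if z' = z then v y else 0) * A (y \<union> z') (y2 \<union> z2) * (if z2 = z then v y2 else 0))"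
        by (intro sum.cong refl) (simp add: w1 w2)
      also have "\<dots> = cnj (v y) * A (y \<union> z) (y2 \<union> z) * v y2"
        using z assms(2) by (intro delta2) auto
      finally show "(\<Sum>z'\<in>Pow Z. \<Sum>z2\<in>Pow Z. cnj (w z (y \<union> z')) * A (y \<union> z') (y2 \<union> z2) * w z (y2 \<union> z2))
         = cnj (v y) * A (y \<union> z) (y2 \<union> z) * v y2" .
    qed
    finally show ?thesis .
  qed
  have "(\<Sum>z\<in>Pow Z. qf (Y \<union> Z) A (w z)) =
     (\<Sum>z\<in>Pow Z. \<Sum>y\<in>Pow Y. \<Sum>y2\<in>Pow Y. cnj (v y) * A (y \<union> z) (y2 \<union> z) * v y2)"
    using key by simp
  also have "\<dots> = (\<Sum>y\<in>Pow Y. \<Sum>y2\<in>Pow Y. \<Sum>z\<in>Pow Z. cnj (v y) * A (y \<union> z) (y2 \<union> z) * v y2)"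
    by (rule swap3b)
  also have "\<dots> = qf Y (ptrace Z A) v"
    by (simp add: qf_def ptrace_def sum_distrib_left sum_distrib_right)
  finally show ?thesis by (simp add: w_def)
qed

lemma ptrace_psd:
  assumes "finite Y" "finite Z" "Y \<inter> Z = {}" "psd (Y \<union> Z) A"
  shows "psd Y (ptrace Z A)"
proof -
  have h: "Im (qf (Y \<union> Z) A w) = 0" "Re (qf (Y \<union> Z) A w) \<ge> 0" for w
    using assms(4) unfolding psd_def by blast+
  show ?thesis
    unfolding psd_def ptrace_qf[OF assms(1-3)] Im_sum Re_sum
    by (simp add: h sum_nonneg)
qed

lemma delta_pair:
  assumes "finite S" "p \<in> S"
  shows "(\<Sum>x\<in>S. cnj (if x = p then X else 0) * (if x = q then Y else (0::complex))) = (if p = q then cnj X * Y else 0)"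
proof -
  have "(\<Sum>x\<in>S. cnj (if x = p then X else 0) * (if x = q then Y else (0::complex)))
     = (\<Sum>x\<in>S. if x = p then (if p = q then cnj X * Y else 0) else 0)"
  proof (rule sum.cong[OF refl])
    fix x show "cnj (if x = p then X else 0) * (if x = q then Y else (0::complex)) = (if x = p then (if p = q then cnj X * Y else 0) else 0)"
      by (cases "x = p"; cases "x = q") simp_all
  qed
  also have "\<dots> = (if p = q then cnj X * Y else 0)"
    using assms by (simp add: sum.delta')
  finally show ?thesis .
qed

lemma embed_unitary:
  assumes fin: "finite N" "finite R" and disj: "N \<inter> R = {}" and V: "unitary_op N V"
  shows "\<forall>c\<in>Pow (N \<union> R). \<forall>d\<in>Pow (N \<union> R).
    (\<Sum>a\<in>Pow (N \<union> R). cnj (embed N V a d) * embed N V a c) = op_id d c"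
proof (intro ballI)
  fix c d assume c: "c \<in> Pow (N \<union> R)" and d: "d \<in> Pow (N \<union> R)"
  have e: "embed N V (a1 \<union> a2) x = (if a2 = x - N then V a1 (x \<inter> N) else 0)"
    if "a1 \<in> Pow N" "a2 \<in> Pow R" for a1 a2 x
    using that disj by (auto simp: embed_def un_int1 un_diff1)
  have "(\<Sum>a\<in>Pow (N \<union> R). cnj (embed N V a d) * embed N V a c)
     = (\<Sum>a1\<in>Pow N. \<Sum>a2\<in>Pow R. cnj (embed N V (a1 \<union> a2) d) * embed N V (a1 \<union> a2) c)"
    by (rule pow_split[OF fin disj])
  also have "\<dots> = (\<Sum>a1\<in>Pow N. \<Sum>a2\<in>Pow R. cnj (if a2 = d - N then V a1 (d \<inter> N) else 0) *
        (if a2 = c - N then V a1 (c \<inter> N) else 0))"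
    by (intro sum.cong refl) (simp add: e)
  also have "\<dots> = (\<Sum>a1\<in>Pow N. if d - N = c - N then cnj (V a1 (d \<inter> N)) * V a1 (c \<inter> N) else 0)"
    using d fin by (intro sum.cong refl delta_pair) auto
  also have "\<dots> = (if d - N = c - N then op_mult N (op_adj V) V (d \<inter> N) (c \<inter> N) else 0)"
    by (simp add: op_mult_def op_adj_def)
  also have "\<dots> = (if d - N = c - N then op_id (d \<inter> N) (c \<inter> N) else 0)"
    using V c d unfolding unitary_op_def by auto
  also have "\<dots> = op_id d c"
    unfolding op_id_def by auto
  finally show "(\<Sum>a\<in>Pow (N \<union> R). cnj (embed N V a d) * embed N V a c) = op_id d c" .
qed

lemma proj_tensor_qf:
  assumes fin: "finite P" "finite R" and disj: "P \<inter> R = {}"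
  shows "qf (P \<union> R) (proj_tensor P \<psi> \<rho>) w = qf R \<rho> (\<lambda>a2. \<Sum>a1\<in>Pow P. cnj (\<psi> a1) * w (a1 \<union> a2))"
proof -
  have "qf (P \<union> R) (proj_tensor P \<psi> \<rho>) w = (\<Sum>a1\<in>Pow P. \<Sum>a2\<in>Pow R. \<Sum>b1\<in>Pow P. \<Sum>b2\<in>Pow R.
      cnj (w (a1 \<union> a2)) * proj_tensor P \<psi> \<rho> (a1 \<union> a2) (b1 \<union> b2) * w (b1 \<union> b2))"
    by (simp only: qf_def pow_split[OF fin disj])
  also have "\<dots> = (\<Sum>a1\<in>Pow P. \<Sum>a2\<in>Pow R. \<Sum>b1\<in>Pow P. \<Sum>b2\<in>Pow R.
      cnj (w (a1 \<union> a2)) * \<psi> a1 * cnj (\<psi> b1) * \<rho> a2 b2 * w (b1 \<union> b2))"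
    using disj by (intro sum.cong refl) (simp add: proj_tensor_def un_int1 un_diff1 mult.assoc)
  also have "\<dots> = (\<Sum>a1\<in>Pow P. \<Sum>b1\<in>Pow P. \<Sum>a2\<in>Pow R. \<Sum>b2\<in>Pow R.
      cnj (w (a1 \<union> a2)) * \<psi> a1 * cnj (\<psi> b1) * \<rho> a2 b2 * w (b1 \<union> b2))"
    by (rule sum.cong[OF refl], rule sum.swap)
  also have "\<dots> = (\<Sum>b2\<in>Pow R. \<Sum>a2\<in>Pow R. \<Sum>a1\<in>Pow P. \<Sum>b1\<in>Pow P.
      cnj (w (a1 \<union> a2)) * \<psi> a1 * cnj (\<psi> b1) * \<rho> a2 b2 * w (b1 \<union> b2))"
    by (rule swap4)
  also have "\<dots> = (\<Sum>a2\<in>Pow R. \<Sum>b2\<in>Pow R. \<Sum>a1\<in>Pow P. \<Sum>b1\<in>Pow P.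
      cnj (w (a1 \<union> a2)) * \<psi> a1 * cnj (\<psi> b1) * \<rho> a2 b2 * w (b1 \<union> b2))"
    by (rule sum.swap)
  also have "\<dots> = qf R \<rho> (\<lambda>a2. \<Sum>a1\<in>Pow P. cnj (\<psi> a1) * w (a1 \<union> a2))"
    unfolding qf_def
  proof (intro sum.cong refl)
    fix a2 b2
    have "cnj (\<Sum>a1\<in>Pow P. cnj (\<psi> a1) * w (a1 \<union> a2)) * \<rho> a2 b2 * (\<Sum>b1\<in>Pow P. cnj (\<psi> b1) * w (b1 \<union> b2))
       = (\<Sum>a1\<in>Pow P. \<psi> a1 * cnj (w (a1 \<union> a2)) * \<rho> a2 b2) * (\<Sum>b1\<in>Pow P. cnj (\<psi> b1) * w (b1 \<union> b2))"
      by (simp add: cnj_sum sum_distrib_right)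
    also have "\<dots> = (\<Sum>a1\<in>Pow P. \<Sum>b1\<in>Pow P. (\<psi> a1 * cnj (w (a1 \<union> a2)) * \<rho> a2 b2) * (cnj (\<psi> b1) * w (b1 \<union> b2)))"
      by (simp only: sum_product)
    also have "\<dots> = (\<Sum>a1\<in>Pow P. \<Sum>b1\<in>Pow P. cnj (w (a1 \<union> a2)) * \<psi> a1 * cnj (\<psi> b1) * \<rho> a2 b2 * w (b1 \<union> b2))"
      by (simp add: mult_ac)
    finally show "(\<Sum>a1\<in>Pow P. \<Sum>b1\<in>Pow P. cnj (w (a1 \<union> a2)) * \<psi> a1 * cnj (\<psi> b1) * \<rho> a2 b2 * w (b1 \<union> b2)) =
      cnj (\<Sum>a1\<in>Pow P. cnj (\<psi> a1) * w (a1 \<union> a2)) * \<rho> a2 b2 * (\<Sum>b1\<in>Pow P. cnj (\<psi> b1) * w (b1 \<union> b2))" by simp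
  qed
  finally show ?thesis .
qed

lemma proj_tensor_tr:
  assumes fin: "finite P" "finite R" and disj: "P \<inter> R = {}"
  shows "tr (P \<union> R) (proj_tensor P \<psi> \<rho>) = (\<Sum>a\<in>Pow P. cnj (\<psi> a) * \<psi> a) * tr R \<rho>"
proof -
  have "tr (P \<union> R) (proj_tensor P \<psi> \<rho>) = (\<Sum>a1\<in>Pow P. \<Sum>a2\<in>Pow R. proj_tensor P \<psi> \<rho> (a1 \<union> a2) (a1 \<union> a2))"
    by (simp only: tr_def pow_split[OF fin disj])
  also have "\<dots> = (\<Sum>a1\<in>Pow P. \<Sum>a2\<in>Pow R. (cnj (\<psi> a1) * \<psi> a1) * \<rho> a2 a2)"
    using disj by (intro sum.cong refl) (simp add: proj_tensor_def un_int1 un_diff1 mult_ac)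
  also have "\<dots> = (\<Sum>a\<in>Pow P. cnj (\<psi> a) * \<psi> a) * tr R \<rho>"
    by (simp only: tr_def sum_product)
  finally show ?thesis .
qed



lemma evolved_props:
  assumes n: "n \<ge> 2" and psi: "unit_vec {1} \<psi>" and rho: "density_op {2..n+1} \<rho>"
    and V: "unitary_op {1..n} V"
  shows "psd {1..n+1} (evolved n \<psi> \<rho> V)" "tr {1..n+1} (evolved n \<psi> \<rho> V) = 1"
proof -
  have Q1: "{1..n+1} = {1} \<union> {2..n+1}" using n by auto
  have Q2: "{1..n+1} = {1..n} \<union> {n+1}" by auto
  have d1: "{1} \<inter> {2..n+1} = {}" by auto
  have d2: "{1..n} \<inter> {n+1} = {}" by auto
  have rho': "tr {2..n+1} \<rho> = 1" "psd {2..n+1} \<rho>" using rho density_op_iff by auto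
  have pq: "qf {1..n+1} (proj_tensor {1} \<psi> \<rho>) w = qf {2..n+1} \<rho> (\<lambda>a2. \<Sum>a1\<in>Pow {1}. cnj (\<psi> a1) * w (a1 \<union> a2))" for w
    unfolding Q1 using d1 by (intro proj_tensor_qf) auto
  have ppsd: "psd {1..n+1} (proj_tensor {1} \<psi> \<rho>)"
    using rho'(2) unfolding psd_def pq by blast
  have eq: "qf {1..n+1} (evolved n \<psi> \<rho> V) v = qf {1..n+1} (proj_tensor {1} \<psi> \<rho>) (\<lambda>c. \<Sum>a\<in>Pow {1..n+1}. cnj (embed {1..n} V a c) * v a)" for v
    unfolding evolved_def by (rule conj_qf)
  show "psd {1..n+1} (evolved n \<psi> \<rho> V)"
    using ppsd unfolding psd_def eq by blast
  have t1: "tr {1..n+1} (proj_tensor {1} \<psi> \<rho>) = (\<Sum>a\<in>Pow {1}. cnj (\<psi> a) * \<psi> a) * tr {2..n+1} \<rho>"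
    unfolding Q1 using d1 by (intro proj_tensor_tr) auto
  have t2: "tr {1..n+1} (proj_tensor {1} \<psi> \<rho>) = 1"
    using t1 rho'(1) psi unfolding unit_vec_def by simp
  have u: "\<forall>c\<in>Pow {1..n+1}. \<forall>d\<in>Pow {1..n+1}. (\<Sum>a\<in>Pow {1..n+1}. cnj (embed {1..n} V a d) * embed {1..n} V a c) = op_id d c"
    unfolding Q2 using d2 V by (intro embed_unitary) auto
  show "tr {1..n+1} (evolved n \<psi> \<rho> V) = 1"
    unfolding evolved_def using conj_tr[OF _ u] t2 by simp
qed

lemma P_left:
  assumes fin: "finite X" "finite S" and disj: "X \<inter> S = {}" and a: "a \<in> Pow S" and c: "c \<in> Pow X"
  shows "(\<Sum>d\<in>Pow (X \<union> S). embed X (meas_proj U t) (a \<union> c) d * F d)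
       = (\<Sum>x\<in>Pow X. cnj (U t c) * U t x * F (x \<union> a))"
proof -
  have disj': "S \<inter> X = {}" using disj by blast
  have "(\<Sum>d\<in>Pow (X \<union> S). embed X (meas_proj U t) (a \<union> c) d * F d)
      = (\<Sum>x\<in>Pow X. \<Sum>s\<in>Pow S. embed X (meas_proj U t) (a \<union> c) (x \<union> s) * F (x \<union> s))"
    by (rule pow_split[OF fin disj])
  also have "\<dots> = (\<Sum>x\<in>Pow X. \<Sum>s\<in>Pow S. if s = a then cnj (U t c) * U t x * F (x \<union> s) else 0)"
  proof (intro sum.cong refl)
    fix x s assume x: "x \<in> Pow X" and s: "s \<in> Pow S"
    have e1: "(a \<union> c) - X = a" using a c disj' by (auto intro: un_diff2)
    have e2: "(x \<union> s) - X = s" using x s disj by (auto intro: un_diff1)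
    have e3: "(a \<union> c) \<inter> X = c" using a c disj' by (auto intro: un_int2)
    have e4: "(x \<union> s) \<inter> X = x" using x s disj by (auto intro: un_int1)
    show "embed X (meas_proj U t) (a \<union> c) (x \<union> s) * F (x \<union> s) = (if s = a then cnj (U t c) * U t x * F (x \<union> s) else 0)"
      unfolding embed_def meas_proj_def e1 e2 e3 e4 by auto
  qed
  also have "\<dots> = (\<Sum>x\<in>Pow X. cnj (U t c) * U t x * F (x \<union> a))"
    using a fin by (intro sum.cong refl) (simp add: sum.delta')
  finally show ?thesis .
qed

lemma P_right:
  assumes fin: "finite X" "finite S" and disj: "X \<inter> S = {}" and b: "b \<in> Pow S" and c: "c \<in> Pow X"
  shows "(\<Sum>e\<in>Pow (X \<union> S). F e * embed X (meas_proj U t) e (b \<union> c))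
       = (\<Sum>y\<in>Pow X. F (y \<union> b) * cnj (U t y) * U t c)"
proof -
  have disj': "S \<inter> X = {}" using disj by blast
  have "(\<Sum>e\<in>Pow (X \<union> S). F e * embed X (meas_proj U t) e (b \<union> c))
      = (\<Sum>y\<in>Pow X. \<Sum>s\<in>Pow S. F (y \<union> s) * embed X (meas_proj U t) (y \<union> s) (b \<union> c))"
    by (rule pow_split[OF fin disj])
  also have "\<dots> = (\<Sum>y\<in>Pow X. \<Sum>s\<in>Pow S. if s = b then F (y \<union> s) * cnj (U t y) * U t c else 0)"
  proof (intro sum.cong refl)
    fix y s assume y: "y \<in> Pow X" and s: "s \<in> Pow S"
    have e1: "(b \<union> c) - X = b" using b c disj' by (auto intro: un_diff2)
    have e2: "(y \<union> s) - X = s" using y s disj by (auto intro: un_diff1)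
    have e3: "(b \<union> c) \<inter> X = c" using b c disj' by (auto intro: un_int2)
    have e4: "(y \<union> s) \<inter> X = y" using y s disj by (auto intro: un_int1)
    show "F (y \<union> s) * embed X (meas_proj U t) (y \<union> s) (b \<union> c) = (if s = b then F (y \<union> s) * cnj (U t y) * U t c else 0)"
      unfolding embed_def meas_proj_def e1 e2 e3 e4 by (auto simp: mult.assoc)
  qed
  also have "\<dots> = (\<Sum>y\<in>Pow X. F (y \<union> b) * cnj (U t y) * U t c)"
    using b fin by (intro sum.cong refl) (simp add: sum.delta')
  finally show ?thesis .
qed


definition Gop :: "nat set \<Rightarrow> qvec \<Rightarrow> qop \<Rightarrow> qop" where
  "Gop X \<phi> M = (\<lambda>a b. \<Sum>x\<in>Pow X. \<Sum>y\<in>Pow X. \<phi> x * M (x \<union> a) (y \<union> b) * cnj (\<phi> y))"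

lemma qf_G:
  assumes fin: "finite X" "finite S" and disj: "X \<inter> S = {}"
  shows "qf S (Gop X \<phi> M) v = qf (X \<union> S) M (\<lambda>d. cnj (\<phi> (d \<inter> X)) * v (d \<inter> S))"
proof -
  have "qf (X \<union> S) M (\<lambda>d. cnj (\<phi> (d \<inter> X)) * v (d \<inter> S)) =
    (\<Sum>x\<in>Pow X. \<Sum>a\<in>Pow S. \<Sum>y\<in>Pow X. \<Sum>b\<in>Pow S.
       cnj (cnj (\<phi> ((x \<union> a) \<inter> X)) * v ((x \<union> a) \<inter> S)) * M (x \<union> a) (y \<union> b) * (cnj (\<phi> ((y \<union> b) \<inter> X)) * v ((y \<union> b) \<inter> S)))"
    by (simp only: qf_def pow_split[OF fin disj])
  also have "\<dots> = (\<Sum>x\<in>Pow X. \<Sum>a\<in>Pow S. \<Sum>y\<in>Pow X. \<Sum>b\<in>Pow S.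
       cnj (v a) * (\<phi> x * M (x \<union> a) (y \<union> b) * cnj (\<phi> y)) * v b)"
  proof (intro sum.cong refl)
    fix x a y b assume "x \<in> Pow X" "a \<in> Pow S" "y \<in> Pow X" "b \<in> Pow S"
    then have "(x \<union> a) \<inter> X = x" "(x \<union> a) \<inter> S = a" "(y \<union> b) \<inter> X = y" "(y \<union> b) \<inter> S = b"
      using disj by (auto intro: un_int1 un_int2)
    then show "cnj (cnj (\<phi> ((x \<union> a) \<inter> X)) * v ((x \<union> a) \<inter> S)) * M (x \<union> a) (y \<union> b) * (cnj (\<phi> ((y \<union> b) \<inter> X)) * v ((y \<union> b) \<inter> S)) =
       cnj (v a) * (\<phi> x * M (x \<union> a) (y \<union> b) * cnj (\<phi> y)) * v b"
      by (simp add: mult_ac)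
  qed
  also have "\<dots> = (\<Sum>x\<in>Pow X. \<Sum>y\<in>Pow X. \<Sum>a\<in>Pow S. \<Sum>b\<in>Pow S.
       cnj (v a) * (\<phi> x * M (x \<union> a) (y \<union> b) * cnj (\<phi> y)) * v b)"
    by (rule sum.cong[OF refl], rule sum.swap)
  also have "\<dots> = (\<Sum>b\<in>Pow S. \<Sum>a\<in>Pow S. \<Sum>x\<in>Pow X. \<Sum>y\<in>Pow X.
       cnj (v a) * (\<phi> x * M (x \<union> a) (y \<union> b) * cnj (\<phi> y)) * v b)"
    by (rule swap4)
  also have "\<dots> = (\<Sum>a\<in>Pow S. \<Sum>b\<in>Pow S. \<Sum>x\<in>Pow X. \<Sum>y\<in>Pow X.
       cnj (v a) * (\<phi> x * M (x \<union> a) (y \<union> b) * cnj (\<phi> y)) * v b)"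
    by (rule sum.swap)
  also have "\<dots> = qf S (Gop X \<phi> M) v"
    by (simp add: qf_def Gop_def sum_distrib_left sum_distrib_right)
  finally show ?thesis by simp
qed

lemma psd_G:
  assumes fin: "finite X" "finite S" and disj: "X \<inter> S = {}" and M: "psd (X \<union> S) M"
  shows "psd S (Gop X \<phi> M)"
  using M unfolding psd_def qf_G[OF assms(1-3)] by blast

lemma tr_G:
  "tr S (Gop X \<phi> M) = (\<Sum>x\<in>Pow X. \<Sum>y\<in>Pow X. \<phi> x * ptrace S M x y * cnj (\<phi> y))"
proof -
  have "tr S (Gop X \<phi> M) = (\<Sum>s\<in>Pow S. \<Sum>x\<in>Pow X. \<Sum>y\<in>Pow X. \<phi> x * M (x \<union> s) (y \<union> s) * cnj (\<phi> y))"
    by (simp add: tr_def Gop_def)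
  also have "\<dots> = (\<Sum>x\<in>Pow X. \<Sum>y\<in>Pow X. \<Sum>s\<in>Pow S. \<phi> x * M (x \<union> s) (y \<union> s) * cnj (\<phi> y))"
    by (rule swap3b)
  also have "\<dots> = (\<Sum>x\<in>Pow X. \<Sum>y\<in>Pow X. \<phi> x * ptrace S M x y * cnj (\<phi> y))"
    by (simp add: ptrace_def sum_distrib_left sum_distrib_right)
  finally show ?thesis .
qed

lemma K_eq:
  assumes fin: "finite X" "finite S" and disj: "X \<inter> S = {}" and a: "a \<in> Pow S" and b: "b \<in> Pow S"
  shows "ptrace X (op_mult (X \<union> S) (op_mult (X \<union> S) (embed X (meas_proj U t)) M) (embed X (meas_proj U t))) a b
     = (\<Sum>c\<in>Pow X. cnj (U t c) * U t c) * Gop X (U t) M a b"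
proof -
  let ?P = "embed X (meas_proj U t)"
  have "ptrace X (op_mult (X \<union> S) (op_mult (X \<union> S) ?P M) ?P) a b
     = (\<Sum>c\<in>Pow X. \<Sum>e\<in>Pow (X \<union> S). (\<Sum>d\<in>Pow (X \<union> S). ?P (a \<union> c) d * M d e) * ?P e (b \<union> c))"
    by (simp add: ptrace_def op_mult_def)
  also have "\<dots> = (\<Sum>c\<in>Pow X. \<Sum>y\<in>Pow X. (\<Sum>d\<in>Pow (X \<union> S). ?P (a \<union> c) d * M d (y \<union> b)) * cnj (U t y) * U t c)"
    using fin disj b by (intro sum.cong refl P_right) auto
  also have "\<dots> = (\<Sum>c\<in>Pow X. \<Sum>y\<in>Pow X. (\<Sum>x\<in>Pow X. cnj (U t c) * U t x * M (x \<union> a) (y \<union> b)) * cnj (U t y) * U t c)"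
  proof (intro sum.cong refl)
    fix c y assume c: "c \<in> Pow X"
    show "(\<Sum>d\<in>Pow (X \<union> S). ?P (a \<union> c) d * M d (y \<union> b)) * cnj (U t y) * U t c =
          (\<Sum>x\<in>Pow X. cnj (U t c) * U t x * M (x \<union> a) (y \<union> b)) * cnj (U t y) * U t c"
      using P_left[OF fin disj a c, of U t "\<lambda>d. M d (y \<union> b)"] by simp
  qed
  also have "\<dots> = (\<Sum>c\<in>Pow X. cnj (U t c) * U t c * (\<Sum>y\<in>Pow X. \<Sum>x\<in>Pow X. U t x * M (x \<union> a) (y \<union> b) * cnj (U t y)))"
    by (simp add: sum_distrib_left sum_distrib_right mult_ac)
  also have "\<dots> = (\<Sum>c\<in>Pow X. cnj (U t c) * U t c * Gop X (U t) M a b)"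
    unfolding Gop_def by (subst (2) sum.swap) (rule refl)
  also have "\<dots> = (\<Sum>c\<in>Pow X. cnj (U t c) * U t c) * Gop X (U t) M a b"
    by (simp add: sum_distrib_right)
  finally show ?thesis .
qed


lemma meas_facts:
  assumes n: "n \<ge> 2" and psi: "unit_vec {1} \<psi>" and rho: "density_op {2..n+1} \<rho>"
    and V: "unitary_op {1..n} V" and U: "unitary_op {3..n} U" and t: "t \<in> Pow {3..n}"
  defines "G \<equiv> Gop {3..n} (U t) (ptrace {1} (evolved n \<psi> \<rho> V))"
  shows "complex_of_real (prob_t n \<psi> \<rho> V U t) = tr {2, n+1} G"
    and "prob_t n \<psi> \<rho> V U t \<ge> 0"
    and "psd {2, n+1} G"
    and "\<forall>a\<in>Pow {2, n+1}. \<forall>b\<in>Pow {2, n+1}. cond_state n \<psi> \<rho> V U t a b = G a b / complex_of_real (prob_t n \<psi> \<rho> V U t)"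
proof -
  let ?E = "evolved n \<psi> \<rho> V"
  let ?M = "ptrace {1} ?E"
  let ?X = "{3..n}" and ?S = "{2, n+1}"
  have fX: "finite ?X" and fS: "finite ?S" by auto
  have dXS: "?X \<inter> ?S = {}" by auto
  have Q1eq: "{2..n+1} = ?X \<union> ?S" using n by auto
  have Qeq: "{1..n+1} = {2..n+1} \<union> {1}" by auto
  have QXeq: "{1..n+1} - ?X = ?S \<union> {1}" using n by auto
  have Epsd: "psd {1..n+1} ?E" using evolved_props[OF n psi rho V] by simp
  have Mpsd: "psd (?X \<union> ?S) ?M"
    unfolding Q1eq[symmetric] using Epsd unfolding Qeq by (intro ptrace_psd) auto
  show Gpsd: "psd ?S G" unfolding G_def using fX fS dXS Mpsd by (rule psd_G)
  have rhoX: "ptrace ({1..n+1} - ?X) ?E x y = ptrace ?S ?M x y" for x y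
    unfolding QXeq using n by (intro ptrace_ptrace[symmetric]) auto
  have pc: "(\<Sum>a\<in>Pow ?X. \<Sum>b\<in>Pow ?X. U t a * ptrace ({1..n+1} - ?X) ?E a b * cnj (U t b)) = tr ?S G"
    unfolding rhoX G_def tr_G by simp
  have trG: "Im (tr ?S G) = 0" "Re (tr ?S G) \<ge> 0" using tr_psd[OF Gpsd fS] by auto
  have pt: "prob_t n \<psi> \<rho> V U t = Re (tr ?S G)"
    unfolding prob_t_def Let_def pc ..
  show "complex_of_real (prob_t n \<psi> \<rho> V U t) = tr ?S G"
    unfolding pt using trG by (simp add: complex_eq_iff)
  show "prob_t n \<psi> \<rho> V U t \<ge> 0" unfolding pt using trG by simp
  have norm: "(\<Sum>c\<in>Pow ?X. cnj (U t c) * U t c) = 1"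
  proof -
    have "op_mult ?X U (op_adj U) t t = op_id t t" using U t unfolding unitary_op_def by blast
    then show ?thesis by (simp add: op_mult_def op_adj_def op_id_def mult.commute)
  qed
  show "\<forall>a\<in>Pow ?S. \<forall>b\<in>Pow ?S. cond_state n \<psi> \<rho> V U t a b = G a b / complex_of_real (prob_t n \<psi> \<rho> V U t)"
  proof (intro ballI)
    fix a b assume a: "a \<in> Pow ?S" and b: "b \<in> Pow ?S"
    show "cond_state n \<psi> \<rho> V U t a b = G a b / complex_of_real (prob_t n \<psi> \<rho> V U t)"
      unfolding cond_state_def Let_def Q1eq K_eq[OF fX fS dXS a b] norm G_def by simp
  qed
qed

lemma prob_sum:
  assumes n: "n \<ge> 2" and psi: "unit_vec {1} \<psi>" and rho: "density_op {2..n+1} \<rho>"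
    and V: "unitary_op {1..n} V" and U: "unitary_op {3..n} U"
  shows "(\<Sum>t\<in>Pow {3..n}. prob_t n \<psi> \<rho> V U t) = 1"
proof -
  let ?E = "evolved n \<psi> \<rho> V"
  let ?X = "{3..n}"
  let ?R = "ptrace ({1..n+1} - ?X) ?E"
  have fX: "finite ?X" by auto
  have "(\<Sum>t\<in>Pow ?X. \<Sum>x\<in>Pow ?X. \<Sum>y\<in>Pow ?X. U t x * ?R x y * cnj (U t y))
      = (\<Sum>x\<in>Pow ?X. \<Sum>y\<in>Pow ?X. \<Sum>t\<in>Pow ?X. U t x * ?R x y * cnj (U t y))"
    by (rule swap3b)
  also have "\<dots> = (\<Sum>x\<in>Pow ?X. \<Sum>y\<in>Pow ?X. ?R x y * op_mult ?X (op_adj U) U y x)"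
    by (simp add: op_mult_def op_adj_def sum_distrib_left sum_distrib_right mult_ac)
  also have "\<dots> = (\<Sum>x\<in>Pow ?X. \<Sum>y\<in>Pow ?X. ?R x y * (if y = x then 1 else 0))"
    using U unfolding unitary_op_def op_id_def by (intro sum.cong refl) auto
  also have "\<dots> = (\<Sum>x\<in>Pow ?X. ?R x x)"
    using fX by (intro sum.cong refl) (simp add: delta1)
  also have "\<dots> = tr ?X ?R" by (simp add: tr_def)
  also have "\<dots> = tr (?X \<union> ({1..n+1} - ?X)) ?E"
    by (rule ptrace_tr) auto
  also have "?X \<union> ({1..n+1} - ?X) = {1..n+1}" by auto
  also have "tr {1..n+1} ?E = 1" using evolved_props[OF n psi rho V] by simp
  finally have c: "(\<Sum>t\<in>Pow ?X. \<Sum>x\<in>Pow ?X. \<Sum>y\<in>Pow ?X. U t x * ?R x y * cnj (U t y)) = 1" .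
  have "(\<Sum>t\<in>Pow ?X. prob_t n \<psi> \<rho> V U t) = Re (\<Sum>t\<in>Pow ?X. \<Sum>x\<in>Pow ?X. \<Sum>y\<in>Pow ?X. U t x * ?R x y * cnj (U t y))"
    by (simp add: prob_t_def Let_def Re_sum)
  also have "\<dots> = 1" using c by simp
  finally show ?thesis .
qed

lemma two_qubit:
  assumes SR: "Sq \<noteq> R" and K: "psd {Sq, R} K" "tr {Sq, R} K = 1"
  shows "two_qubit_state (to_2qubit Sq R K)"
proof -
  define idx where "idx i = (if i div 2 = 1 then {Sq} else {}) \<union> (if i mod 2 = 1 then {R} else {})" for i :: nat
  have four: "{..<4::nat} = {0,1,2,3}" by auto
  have i0: "idx 0 = {}" and i1: "idx 1 = {R}" and i2: "idx 2 = {Sq}" and i3: "idx 3 = {Sq, R}"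
    by (auto simp: idx_def)
  have i1': "idx (Suc 0) = {R}" using i1 by simp
  have inj: "inj_on idx {..<4}"
    unfolding four inj_on_def using SR by (auto simp: i0 i1 i1' i2 i3 doubleton_eq_iff)
  have img: "idx ` {..<4} = Pow {Sq, R}"
  proof
    show "idx ` {..<4} \<subseteq> Pow {Sq, R}" unfolding four by (auto simp: i0 i1 i1' i2 i3)
    show "Pow {Sq, R} \<subseteq> idx ` {..<4}"
    proof
      fix a assume "a \<in> Pow {Sq, R}"
      then have "a = {} \<or> a = {R} \<or> a = {Sq} \<or> a = {Sq, R}" by blast
      then show "a \<in> idx ` {..<4}" unfolding four by (auto simp: i0 i1 i1' i2 i3)
    qed
  qed
  have bij: "bij_betw idx {..<4} (Pow {Sq, R})" using inj img by (simp add: bij_betw_def)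
  have ent: "to_2qubit Sq R K $$ (i, j) = K (idx i) (idx j)" if "i < 4" "j < 4" for i j
    using that by (simp add: to_2qubit_def idx_def)
  have car: "to_2qubit Sq R K \<in> carrier_mat 4 4" by (simp add: to_2qubit_def)
  have trc: "(\<Sum>i<4. to_2qubit Sq R K $$ (i, i)) = 1"
  proof -
    have "(\<Sum>i<4. to_2qubit Sq R K $$ (i, i)) = (\<Sum>i<4. K (idx i) (idx i))"
      by (intro sum.cong refl) (simp add: ent)
    also have "\<dots> = (\<Sum>a\<in>Pow {Sq, R}. K a a)"
      by (rule sum.reindex_bij_betw[OF bij])
    finally show ?thesis using K(2) by (simp add: tr_def)
  qed
  have qfc: "(\<Sum>i<4. \<Sum>j<4. cnj (v i) * to_2qubit Sq R K $$ (i, j) * v j) = qf {Sq, R} K (\<lambda>a. v (inv_into {..<4} idx a))"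
    for v :: "nat \<Rightarrow> complex"
  proof -
    let ?w = "\<lambda>a. v (inv_into {..<4} idx a)"
    have w: "?w (idx i) = v i" if "i < 4" for i
      using inv_into_f_f[OF inj] that by simp
    have "(\<Sum>i<4. \<Sum>j<4. cnj (v i) * to_2qubit Sq R K $$ (i, j) * v j)
        = (\<Sum>i<4. \<Sum>j<4. cnj (?w (idx i)) * K (idx i) (idx j) * ?w (idx j))"
      by (intro sum.cong refl) (simp add: ent w)
    also have "\<dots> = (\<Sum>i<4. \<Sum>b\<in>Pow {Sq, R}. cnj (?w (idx i)) * K (idx i) b * ?w b)"
      by (intro sum.cong refl sum.reindex_bij_betw[OF bij])
    also have "\<dots> = (\<Sum>a\<in>Pow {Sq, R}. \<Sum>b\<in>Pow {Sq, R}. cnj (?w a) * K a b * ?w b)"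
      by (rule sum.reindex_bij_betw[OF bij])
    finally show ?thesis by (simp add: qf_def)
  qed
  show ?thesis
    unfolding two_qubit_state_def qfc using car trc K(1) unfolding psd_def by blast
qed

lemma cond_two_qubit:
  assumes n: "n \<ge> 2" and psi: "unit_vec {1} \<psi>" and rho: "density_op {2..n+1} \<rho>"
    and V: "unitary_op {1..n} V" and U: "unitary_op {3..n} U" and t: "t \<in> Pow {3..n}"
    and pos: "prob_t n \<psi> \<rho> V U t > 0"
  shows "two_qubit_state (to_2qubit 2 (n+1) (cond_state n \<psi> \<rho> V U t))"
proof -
  define G where "G = Gop {3..n} (U t) (ptrace {1} (evolved n \<psi> \<rho> V))"
  define p where "p = prob_t n \<psi> \<rho> V U t"
  note mf = meas_facts[OF n psi rho V U t, folded G_def p_def]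
  let ?C = "cond_state n \<psi> \<rho> V U t"
  have p: "p > 0" using pos p_def by simp
  have ent: "\<forall>a\<in>Pow {2, n+1}. \<forall>b\<in>Pow {2, n+1}. ?C a b = G a b / complex_of_real p" using mf(4) .
  have qfC: "qf {2, n+1} ?C v = qf {2, n+1} G v / complex_of_real p" for v
  proof -
    have "qf {2, n+1} ?C v = (\<Sum>a\<in>Pow {2, n+1}. \<Sum>b\<in>Pow {2, n+1}. cnj (v a) * G a b * v b / complex_of_real p)"
      unfolding qf_def using ent by (intro sum.cong refl) simp
    also have "\<dots> = qf {2, n+1} G v / complex_of_real p"
      by (simp add: qf_def sum_divide_distrib)
    finally show ?thesis .
  qed
  have psdC: "psd {2, n+1} ?C"
    using mf(3) p unfolding psd_def qfC by (simp add: Re_divide_of_real Im_divide_of_real)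
  have trC: "tr {2, n+1} ?C = 1"
  proof -
    have "tr {2, n+1} ?C = (\<Sum>a\<in>Pow {2, n+1}. G a a / complex_of_real p)"
      unfolding tr_def using ent by (intro sum.cong refl) simp
    also have "\<dots> = tr {2, n+1} G / complex_of_real p"
      by (simp add: tr_def sum_divide_distrib)
    also have "\<dots> = 1" unfolding mf(1)[symmetric] using p by simp
    finally show ?thesis .
  qed
  show ?thesis
    using n psdC trC by (intro two_qubit) auto
qed

lemma unitary_id:
  assumes "finite Q" shows "unitary_op Q op_id"
proof -
  have adj: "op_adj op_id = op_id" by (auto simp: op_adj_def op_id_def fun_eq_iff)
  have m: "op_mult Q op_id op_id a b = op_id a b" if "a \<in> Pow Q" for a b
  proof -
    have "op_mult Q op_id op_id a b = (\<Sum>c\<in>Pow Q. if c = a then op_id a b else 0)"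
      unfolding op_mult_def by (intro sum.cong refl) (auto simp: op_id_def)
    also have "\<dots> = op_id a b" using that assms by (simp add: sum.delta')
    finally show ?thesis .
  qed
  show ?thesis unfolding unitary_op_def adj using m by auto
qed

lemma sum_affine:
  fixes p c :: "nat set \<Rightarrow> real"
  shows "(\<Sum>t\<in>A. p t * ((\<alpha> + \<beta> * c t) / \<gamma>)) = (\<alpha> * (\<Sum>t\<in>A. p t) + \<beta> * (\<Sum>t\<in>A. p t * c t)) / \<gamma>"
proof -
  have "(\<Sum>t\<in>A. p t * ((\<alpha> + \<beta> * c t) / \<gamma>)) = (\<Sum>t\<in>A. (\<alpha> * p t + \<beta> * (p t * c t)) / \<gamma>)"
    by (intro sum.cong refl) (simp add: algebra_simps add_divide_distrib)
  also have "\<dots> = (\<alpha> * (\<Sum>t\<in>A. p t) + \<beta> * (\<Sum>t\<in>A. p t * c t)) / \<gamma>"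
    by (simp add: sum_divide_distrib[symmetric] sum.distrib sum_distrib_left)
  finally show ?thesis .
qed

theorem proposition1:
  fixes n :: nat and \<psi> :: qvec and \<rho> V :: qop and F :: "complex mat \<Rightarrow> real"
  assumes F_known: "\<And>\<sigma>. two_qubit_state \<sigma> \<Longrightarrow>
             max ((3 + concurrence \<sigma>) / 6) ((1 + 2 * concurrence \<sigma>) / 3) \<le> F \<sigma> \<and>
             F \<sigma> \<le> (2 + concurrence \<sigma>) / 3"
    and n: "n \<ge> 2"
    and psi: "unit_vec {1} \<psi>"
    and rho: "density_op {2..n+1} \<rho>"
    and V: "unitary_op {1..n} V"
  shows "max ((3 + localizable_concurrence n \<psi> \<rho> V) / 6)
             ((1 + 2 * localizable_concurrence n \<psi> \<rho> V) / 3)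
           \<le> teleportation_fidelity F n \<psi> \<rho> V
         \<and> teleportation_fidelity F n \<psi> \<rho> V \<le> (2 + localizable_concurrence n \<psi> \<rho> V) / 3"
proof -
  define US where "US = {U. unitary_op {3..n} U}"
  define Tp where "Tp U = {t. t \<subseteq> {3..n} \<and> prob_t n \<psi> \<rho> V U t > 0}" for U
  define L where "L U = (\<Sum>t\<in>Tp U. prob_t n \<psi> \<rho> V U t * concurrence (to_2qubit 2 (n+1) (cond_state n \<psi> \<rho> V U t)))" for U
  define T where "T U = (\<Sum>t\<in>Tp U. prob_t n \<psi> \<rho> V U t * F (to_2qubit 2 (n+1) (cond_state n \<psi> \<rho> V U t)))" for U
  have LC: "localizable_concurrence n \<psi> \<rho> V = (SUP U\<in>US. L U)"
    by (simp add: localizable_concurrence_def US_def L_def Tp_def)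
  have TF: "teleportation_fidelity F n \<psi> \<rho> V = (SUP U\<in>US. T U)"
    by (simp add: teleportation_fidelity_def US_def T_def Tp_def)
  have ne: "US \<noteq> {}" using unitary_id[of "{3..n}"] unfolding US_def by auto
  have per: "0 \<le> L U \<and> L U \<le> 1 \<and> T U \<le> (2 + L U) / 3 \<and> (3 + L U) / 6 \<le> T U \<and> (1 + 2 * L U) / 3 \<le> T U"
    if "U \<in> US" for U
  proof -
    have Uu: "unitary_op {3..n} U" using that US_def by simp
    define p where "p t = prob_t n \<psi> \<rho> V U t" for t
    define c where "c t = concurrence (to_2qubit 2 (n+1) (cond_state n \<psi> \<rho> V U t))" for t
    define f where "f t = F (to_2qubit 2 (n+1) (cond_state n \<psi> \<rho> V U t))" for t
    have Ld: "L U = (\<Sum>t\<in>Tp U. p t * c t)" by (simp add: L_def p_def c_def)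
    have Td: "T U = (\<Sum>t\<in>Tp U. p t * f t)" by (simp add: T_def p_def f_def)
    have sub: "Tp U \<subseteq> Pow {3..n}" by (auto simp: Tp_def)
    have fin: "finite (Tp U)" using sub finite_subset by blast
    have sum1: "(\<Sum>t\<in>Tp U. p t) = 1"
    proof -
      have "(\<Sum>t\<in>Pow {3..n}. p t) = (\<Sum>t\<in>Tp U. p t)"
      proof (rule sum.mono_neutral_right)
        show "finite (Pow {3..n})" by simp
        show "Tp U \<subseteq> Pow {3..n}" by (rule sub)
        show "\<forall>i\<in>Pow {3..n} - Tp U. p i = 0"
        proof
          fix i assume i: "i \<in> Pow {3..n} - Tp U"
          then have "p i \<ge> 0" using meas_facts(2)[OF n psi rho V Uu] p_def by auto
          moreover have "\<not> p i > 0" using i by (auto simp: Tp_def p_def)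
          ultimately show "p i = 0" by simp
        qed
      qed
      then show ?thesis using prob_sum[OF n psi rho V Uu] p_def by simp
    qed
    have bnd: "p t > 0 \<and> 0 \<le> c t \<and> c t \<le> 1 \<and> f t \<le> (2 + 1 * c t) / 3 \<and> (3 + 1 * c t) / 6 \<le> f t \<and> (1 + 2 * c t) / 3 \<le> f t"
      if t: "t \<in> Tp U" for t
    proof -
      have tp: "t \<in> Pow {3..n}" "prob_t n \<psi> \<rho> V U t > 0" using t by (auto simp: Tp_def)
      have tq: "two_qubit_state (to_2qubit 2 (n+1) (cond_state n \<psi> \<rho> V U t))"
        by (rule cond_two_qubit[OF n psi rho V Uu tp])
      have Fk: "max ((3 + c t) / 6) ((1 + 2 * c t) / 3) \<le> f t \<and> f t \<le> (2 + c t) / 3"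
        using F_known[OF tq] unfolding c_def f_def .
      have c0: "0 \<le> c t" unfolding c_def concurrence_def Let_def by simp
      show ?thesis using Fk c0 tp(2) p_def by auto
    qed
    have L0: "0 \<le> L U" unfolding Ld
    proof (intro sum_nonneg)
      fix x assume x: "x \<in> Tp U"
      show "0 \<le> p x * c x" using bnd[OF x] by (auto intro!: mult_nonneg_nonneg)
    qed
    have L1: "L U \<le> 1"
    proof -
      have "L U \<le> (\<Sum>t\<in>Tp U. p t)" unfolding Ld
        using bnd by (intro sum_mono) (auto intro: mult_left_le)
      then show ?thesis using sum1 by simp
    qed
    have T1: "T U \<le> (2 + L U) / 3"
    proof -
      have "T U \<le> (\<Sum>t\<in>Tp U. p t * ((2 + 1 * c t) / 3))" unfolding Td
      proof (rule sum_mono, goal_cases)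
        case (1 t)
        from bnd[OF 1] have "0 \<le> p t" "f t \<le> (2 + 1 * c t) / 3" "(3 + 1 * c t) / 6 \<le> f t" "(1 + 2 * c t) / 3 \<le> f t"
          by auto
        then show ?case by (intro mult_left_mono) auto
      qed
      also have "\<dots> = (2 * (\<Sum>t\<in>Tp U. p t) + 1 * (\<Sum>t\<in>Tp U. p t * c t)) / 3" by (rule sum_affine)
      finally show ?thesis using sum1 Ld by simp
    qed
    have T2: "(3 + L U) / 6 \<le> T U"
    proof -
      have "(3 * (\<Sum>t\<in>Tp U. p t) + 1 * (\<Sum>t\<in>Tp U. p t * c t)) / 6 = (\<Sum>t\<in>Tp U. p t * ((3 + 1 * c t) / 6))"
        by (rule sum_affine[symmetric])
      also have "\<dots> \<le> T U" unfolding Td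
      proof (rule sum_mono, goal_cases)
        case (1 t)
        from bnd[OF 1] have "0 \<le> p t" "f t \<le> (2 + 1 * c t) / 3" "(3 + 1 * c t) / 6 \<le> f t" "(1 + 2 * c t) / 3 \<le> f t"
          by auto
        then show ?case by (intro mult_left_mono) auto
      qed
      finally show ?thesis using sum1 Ld by simp
    qed
    have T3: "(1 + 2 * L U) / 3 \<le> T U"
    proof -
      have "(1 * (\<Sum>t\<in>Tp U. p t) + 2 * (\<Sum>t\<in>Tp U. p t * c t)) / 3 = (\<Sum>t\<in>Tp U. p t * ((1 + 2 * c t) / 3))"
        by (rule sum_affine[symmetric])
      also have "\<dots> \<le> T U" unfolding Td
      proof (rule sum_mono, goal_cases)
        case (1 t)
        from bnd[OF 1] have "0 \<le> p t" "f t \<le> (2 + 1 * c t) / 3" "(3 + 1 * c t) / 6 \<le> f t" "(1 + 2 * c t) / 3 \<le> f t"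
          by auto
        then show ?case by (intro mult_left_mono) auto
      qed
      finally show ?thesis using sum1 Ld by simp
    qed
    show ?thesis using L0 L1 T1 T2 T3 by simp
  qed
  have bL: "bdd_above (L ` US)" using per by (intro bdd_aboveI2[where M = 1]) auto
  have bT: "bdd_above (T ` US)" using per by (intro bdd_aboveI2[where M = 1]) fastforce
  define LS where "LS = (SUP U\<in>US. L U)"
  define TS where "TS = (SUP U\<in>US. T U)"
  have Lle: "L U \<le> LS" if "U \<in> US" for U unfolding LS_def using bL that by (rule cSUP_upper2) simp
  have Tle: "T U \<le> TS" if "U \<in> US" for U unfolding TS_def using bT that by (rule cSUP_upper2) simp
  have up: "TS \<le> (2 + LS) / 3" unfolding TS_def
  proof (rule cSUP_least[OF ne])
    fix U assume U: "U \<in> US"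
    show "T U \<le> (2 + LS) / 3" using per[OF U] Lle[OF U] by (auto simp: field_simps)
  qed
  have lo1: "LS \<le> 6 * TS - 3" unfolding LS_def
  proof (rule cSUP_least[OF ne])
    fix U assume U: "U \<in> US"
    show "L U \<le> 6 * TS - 3" using per[OF U] Tle[OF U] by (auto simp: field_simps)
  qed
  have lo2: "LS \<le> (3 * TS - 1) / 2" unfolding LS_def
  proof (rule cSUP_least[OF ne])
    fix U assume U: "U \<in> US"
    show "L U \<le> (3 * TS - 1) / 2" using per[OF U] Tle[OF U] by (auto simp: field_simps)
  qed
  show ?thesis unfolding LC TF LS_def[symmetric] TS_def[symmetric]
    using up lo1 lo2 by auto
qed

end
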